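(* Let $\mathbb{F}\in\{\mathbb{R},\mathbb{C}\}$, let $1\le l\le m$ be integers (with $m\ge2$), and let $\{e_j\}_{j=1}^m$ be an orthonormal basis of $\mathbb{F}^m$, with $E_{j,j'}=e_j\otimes e_{j'}^*$. Then the $2$-coherence tensors satisfy $$K_{2,l,m}=\Big(l-\frac{l(l-1)}{m-1}\Big)K_{2,1,m}+\frac{l(l-1)}{m(m-1)}\,I_m\otimes I_m,$$ and $$K_{2,1,m}=a\sum_{j=1}^mE_{j,j}\otimes E_{j,j}+\sum_{\substack{j,j'=1\\ j\neq j'}}^m\Big(b\,(E_{j,j'}\otimes E_{j',j}+E_{j,j}\otimes E_{j',j'})+c\,E_{j,j'}\otimes E_{j,j'}\Big),$$ where $a=\frac{d_{\mathbb{F}}(m)+(m-1)^2}{m^2d_{\mathbb{F}}(m)}$, and $b=c=a/3$ if $\mathbb{F}=\mathbb{R}$, while $b=a/2$, $c=0$ if $\mathbb{F}=\mathbb{C}$.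
   Context: Let $\mathcal{U}$ be the group of orthogonal (if $\mathbb{F}=\mathbb{R}$) or unitary (if $\mathbb{F}=\mathbb{C}$) $m\times m$ matrices with normalized Haar measure $\mu$. For a positive integer $t$, the $t$-coherence tensor is $K_{t,l,m}=\int_{\mathcal{U}}(UPU^* )^{\otimes t}\,d\mu(U)$, where $P$ is any rank-$l$ orthogonal projection on $\mathbb{F}^m$ and $^{\otimes t}$ denotes the $t$-fold Kronecker product (this does not depend on the choice of $P$). Also $d_{\mathbb{F}}(m)=\frac{(m+2)(m-1)}{2}$ if $\mathbb{F}=\mathbb{R}$ and $d_{\mathbb{F}}(m)=m^2-1$ if $\mathbb{F}=\mathbb{C}$. *)

theory Defs
  imports "HOL-Probability.Probability"
begin

text \<open>Matrices over F (F = real or complex) are indexed by a finite type 'n with CARD('n) = m.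
  The conjugation map cj is id for F = real and cnj for F = complex.\<close>

definition adj :: "('a \<Rightarrow> 'a) \<Rightarrow> 'a^'n^'m \<Rightarrow> 'a^'m^'n" where
  "adj cj A = (\<chi> i j. cj (A $ j $ i))"

definition kron :: "'a::times^'n^'m \<Rightarrow> 'a^'q^'p \<Rightarrow> 'a^('n \<times> 'q)^('m \<times> 'p)" where
  "kron A B = (\<chi> r s. A $ fst r $ fst s * B $ snd r $ snd s)"

definition unitary_grp :: "('a::semiring_1 \<Rightarrow> 'a) \<Rightarrow> ('a^'n^'n) set" where
  "unitary_grp cj = {U. U ** adj cj U = mat 1}"

text \<open>M is the normalized Haar measure: a left-invariant Borel probability measure
  concentrated on the group (unique).\<close>
definition haar_prob :: "('a::{real_normed_field,euclidean_space} \<Rightarrow> 'a) \<Rightarrow> ('a^'n^'n) measure \<Rightarrow> bool" where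
  "haar_prob cj M \<longleftrightarrow> sets M = sets borel \<and> prob_space M \<and>
     (AE U in M. U \<in> unitary_grp cj) \<and>
     (\<forall>V \<in> unitary_grp cj. distr M M (\<lambda>U. V ** U) = M)"

definition orth_proj :: "('a::semiring_1 \<Rightarrow> 'a) \<Rightarrow> 'a^'n^'n \<Rightarrow> bool" where
  "orth_proj cj P \<longleftrightarrow> P ** P = P \<and> adj cj P = P"

definition coh2 :: "('a::{real_normed_field,euclidean_space} \<Rightarrow> 'a) \<Rightarrow> ('a^'n^'n) measure \<Rightarrow> 'a^'n^'n
    \<Rightarrow> 'a^('n \<times> 'n)^('n \<times> 'n)" where
  "coh2 cj M P = integral\<^sup>L M (\<lambda>U. kron (U ** P ** adj cj U) (U ** P ** adj cj U))"

definition orthonormal_family :: "('a::semiring_1 \<Rightarrow> 'a) \<Rightarrow> ('n::finite \<Rightarrow> 'a^'n) \<Rightarrow> bool" where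
  "orthonormal_family cj e \<longleftrightarrow>
     (\<forall>j j'. (\<Sum>i\<in>UNIV. e j $ i * cj (e j' $ i)) = (if j = j' then 1 else 0))"

definition Eunit :: "('a::times \<Rightarrow> 'a) \<Rightarrow> ('n \<Rightarrow> 'a^'n) \<Rightarrow> 'n \<Rightarrow> 'n \<Rightarrow> 'a^'n^'n" where
  "Eunit cj e j j' = (\<chi> a b. e j $ a * cj (e j' $ b))"

definition dF_real :: "nat \<Rightarrow> real" where
  "dF_real m = (real m + 2) * (real m - 1) / 2"

definition dF_complex :: "nat \<Rightarrow> real" where
  "dF_complex m = (real m)^2 - 1"

end

theory Submission
  imports Defs
begin


locale cjf =
  fixes cj :: "'a::{real_normed_field,euclidean_space} \<Rightarrow> 'a"
  assumes cj_add: "cj (x + y) = cj x + cj y"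
    and cj_mult: "cj (x * y) = cj x * cj y"
    and cj_cj: "cj (cj x) = x"
    and cj_of_real: "cj (of_real r) = of_real r"
    and cj_cont: "continuous_on UNIV cj"
    and cj_sq: "x * cj x = of_real ((norm x)^2)"
begin

lemma cj_0[simp]: "cj 0 = 0" using cj_of_real[of 0] by simp
lemma cj_1[simp]: "cj 1 = 1" using cj_of_real[of 1] by simp
lemma cj_minus: "cj (- x) = - cj x"
proof -
  have "cj x + cj (- x) = 0" using cj_add[of x "-x"] by simp
  thus ?thesis by (simp add: add_eq_0_iff)
qed
lemma cj_sum: "cj (\<Sum>i\<in>S. f i) = (\<Sum>i\<in>S. cj (f i))"
  by (induction S rule: infinite_finite_induct) (auto simp: cj_add)

lemma adj_mult: "adj cj (A ** B) = adj cj B ** adj cj A"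
  by (simp add: vec_eq_iff adj_def matrix_matrix_mult_def cj_sum cj_mult mult.commute)

lemma adj_adj: "adj cj (adj cj A) = A"
  by (simp add: vec_eq_iff adj_def cj_cj)

lemma adj_mat1: "adj cj (mat 1 :: 'a^'n^'n) = mat 1"
  by (simp add: vec_eq_iff adj_def mat_def)

lemma unitary_left: "U \<in> unitary_grp cj \<Longrightarrow> adj cj U ** U = mat 1"
  unfolding unitary_grp_def using matrix_left_right_inverse by blast

lemma unit_entry_bound:
  assumes "U \<in> unitary_grp cj"
  shows "norm (U $ i $ j) \<le> 1"
proof -
  have "(U ** adj cj U) $ i $ i = 1" using assms by (simp add: unitary_grp_def mat_def)
  hence "(\<Sum>k\<in>UNIV. U $ i $ k * cj (U $ i $ k)) = 1"
    by (simp add: matrix_matrix_mult_def adj_def)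
  hence "of_real (\<Sum>k\<in>UNIV. (norm (U $ i $ k))^2) = (1::'a)"
    by (simp add: cj_sq)
  hence s: "(\<Sum>k\<in>UNIV. (norm (U $ i $ k))^2) = 1" using of_real_eq_1_iff by blast
  have "(norm (U $ i $ j))^2 \<le> (\<Sum>k\<in>UNIV. (norm (U $ i $ k))^2)"
    by (rule member_le_sum) auto
  hence "(norm (U $ i $ j))^2 \<le> 1" using s by simp
  thus ?thesis by (simp add: power_le_one_iff abs_square_le_1)
qed

lemma cont_cj: "continuous_on S f \<Longrightarrow> continuous_on S (\<lambda>x. cj (f x))"
  using continuous_on_compose2[OF cj_cont] by blast

lemma xf_entry: "(U ** P ** adj cj U) $ i $ j = (\<Sum>k\<in>UNIV. \<Sum>l\<in>UNIV. U $ i $ k * P $ k $ l * cj (U $ j $ l))"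
  by (simp add: matrix_matrix_mult_def adj_def sum_distrib_left sum_distrib_right mult.assoc)
     (rule sum.swap)

lemma xf_cont: "continuous_on UNIV (\<lambda>U. (U ** P ** adj cj U) $ i $ j)"
  unfolding xf_entry
  by (intro continuous_intros cont_cj)

end

lemma norm_vec_le_sum: "norm (v::'b::real_normed_vector^'m) \<le> (\<Sum>i\<in>UNIV. norm (v $ i))"
  by (simp add: norm_vec_def L2_set_le_sum)

lemma cont_matmul: "continuous_on UNIV (\<lambda>U::'a::real_normed_algebra_1^'n^'n. V ** U)"
  unfolding matrix_matrix_mult_def by (intro continuous_intros)

locale haarctx = cjf cj for cj :: "'a::{real_normed_field,euclidean_space} \<Rightarrow> 'a" +
  fixes M :: "('a^'n^'n) measure" and P :: "'a^'n^'n"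
  assumes haar: "haar_prob cj M" and proj: "orth_proj cj P"
begin

definition X where "X U = U ** P ** adj cj U"
definition Q where "Q i j k l = (\<integral>U. X U $ i $ j * X U $ k $ l \<partial>M)"
definition BP where "BP = (\<Sum>k\<in>UNIV. \<Sum>l\<in>UNIV. norm (P $ k $ l))"

lemma prob: "prob_space M" using haar by (simp add: haar_prob_def)
lemma sets_M: "sets M = sets borel" using haar by (simp add: haar_prob_def)
lemma AE_unit: "AE U in M. U \<in> unitary_grp cj" using haar by (simp add: haar_prob_def)

lemma fm: "finite_measure M" using prob prob_space_def by blast

lemma meas_cont: "continuous_on UNIV f \<Longrightarrow> f \<in> borel_measurable M"
  using measurable_cong_sets[OF sets_M refl] borel_measurable_continuous_onI by blast

lemma X_cont: "continuous_on UNIV (\<lambda>U. X U $ i $ j)"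
  unfolding X_def by (rule xf_cont)

lemma BP_nonneg: "0 \<le> BP" unfolding BP_def by (intro sum_nonneg) auto

lemma X_bound: assumes "U \<in> unitary_grp cj" shows "norm (X U $ i $ j) \<le> BP"
proof -
  have "norm (X U $ i $ j) \<le> (\<Sum>k\<in>UNIV. \<Sum>l\<in>UNIV. norm (U $ i $ k * P $ k $ l * cj (U $ j $ l)))"
    unfolding X_def xf_entry by (intro order.trans[OF norm_sum] sum_mono norm_sum)
  also have "\<dots> \<le> BP" unfolding BP_def
  proof (intro sum_mono)
    fix k l
    have "norm (cj (U $ j $ l)) \<le> 1"
    proof -
      have "(norm (cj (U $ j $ l)))^2 = (norm (U $ j $ l))^2"
      proof -
        have "of_real ((norm (cj (U $ j $ l)))^2) = cj (U $ j $ l) * cj (cj (U $ j $ l))"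
          by (simp add: cj_sq)
        also have "\<dots> = of_real ((norm (U $ j $ l))^2)" by (metis cj_cj cj_sq mult.commute)
        finally show ?thesis using of_real_eq_iff by blast
      qed
      thus ?thesis using unit_entry_bound[OF assms, of j l]
        by (metis abs_norm_cancel norm_ge_zero power2_le_imp_le real_sqrt_abs real_sqrt_le_mono)
    qed
    thus "norm (U $ i $ k * P $ k $ l * cj (U $ j $ l)) \<le> norm (P $ k $ l)"
      using unit_entry_bound[OF assms, of i k]
      by (simp add: norm_mult) (metis mult_le_one mult.commute mult_left_le norm_ge_zero mult_mono mult.left_neutral)
  qed
  finally show ?thesis .
qed

lemma int_entry: "integrable M (\<lambda>U. X U $ i $ j)"
proof (rule finite_measure.integrable_const_bound[OF fm])
  show "AE U in M. norm (X U $ i $ j) \<le> BP" using AE_unit by eventually_elim (rule X_bound)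
  show "(\<lambda>U. X U $ i $ j) \<in> borel_measurable M" by (rule meas_cont[OF X_cont])
qed

lemma int_prod: "integrable M (\<lambda>U. X U $ i $ j * X U $ k $ l)"
proof (rule finite_measure.integrable_const_bound[OF fm])
  show "AE U in M. norm (X U $ i $ j * X U $ k $ l) \<le> BP * BP" using AE_unit
    by eventually_elim (simp add: norm_mult mult_mono X_bound BP_nonneg)
  show "(\<lambda>U. X U $ i $ j * X U $ k $ l) \<in> borel_measurable M"
    by (intro meas_cont continuous_intros X_cont)
qed

lemma kron_XX: "kron (X U) (X U) = (\<chi> r s. X U $ fst r $ fst s * X U $ snd r $ snd s)"
  by (simp add: kron_def)

lemma int_kron: "integrable M (\<lambda>U. kron (X U) (X U))"
proof (rule finite_measure.integrable_const_bound[OF fm])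
  show "AE U in M. norm (kron (X U) (X U)) \<le> real (CARD('n \<times> 'n)) * (real (CARD('n \<times> 'n)) * (BP * BP))" using AE_unit
  proof eventually_elim
    case (elim U)
    have "norm (kron (X U) (X U)) \<le> (\<Sum>r\<in>UNIV. norm (kron (X U) (X U) $ r))" by (rule norm_vec_le_sum)
    also have "\<dots> \<le> (\<Sum>r\<in>(UNIV::('n\<times>'n) set). \<Sum>s\<in>(UNIV::('n\<times>'n) set). norm (kron (X U) (X U) $ r $ s))"
      by (intro sum_mono norm_vec_le_sum)
    also have "\<dots> \<le> (\<Sum>r\<in>(UNIV::('n\<times>'n) set). \<Sum>s\<in>(UNIV::('n\<times>'n) set). BP * BP)"
      by (intro sum_mono) (simp add: kron_XX norm_mult mult_mono X_bound BP_nonneg elim)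
    finally show ?case by simp
  qed
  show "(\<lambda>U. kron (X U) (X U)) \<in> borel_measurable M"
    unfolding kron_XX by (intro meas_cont continuous_intros X_cont)
qed

lemma coh_entry: "coh2 cj M P $ r $ s = Q (fst r) (fst s) (snd r) (snd s)"
proof -
  have bl: "bounded_linear (\<lambda>v::'a^('n\<times>'n)^('n\<times>'n). v $ r $ s)"
    using bounded_linear_compose[OF bounded_linear_vec_nth bounded_linear_vec_nth] by blast
  have "coh2 cj M P $ r $ s = (\<integral>U. kron (X U) (X U) $ r $ s \<partial>M)"
    unfolding coh2_def X_def[symmetric] using integral_bounded_linear[OF bl int_kron] by simp
  thus ?thesis by (simp add: kron_XX Q_def)
qed

lemma invariance:
  fixes f :: "'a^'n^'n \<Rightarrow> 'a"
  assumes V: "V \<in> unitary_grp cj" and f: "f \<in> borel_measurable borel"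
  shows "(\<integral>U. f U \<partial>M) = (\<integral>U. f (V ** U) \<partial>M)"
proof -
  have T: "(\<lambda>U. V ** U) \<in> measurable M M"
    using measurable_cong_sets[OF sets_M sets_M] borel_measurable_continuous_onI[OF cont_matmul] by blast
  have fM: "f \<in> borel_measurable M" using measurable_cong_sets[OF sets_M refl] f by blast
  have "integral\<^sup>L (distr M M (\<lambda>U. V ** U)) f = (\<integral>U. f (V ** U) \<partial>M)"
    by (rule integral_distr[OF T fM])
  moreover have "distr M M (\<lambda>U. V ** U) = M" using haar V by (simp add: haar_prob_def)
  ultimately show ?thesis by simp
qed

lemma X_mult: "X (V ** U) = V ** X U ** adj cj V"
  by (simp add: X_def adj_mult matrix_mul_assoc)

lemma QV: assumes V: "V \<in> unitary_grp cj"
  shows "Q i j k l = (\<integral>U. (V ** X U ** adj cj V) $ i $ j * (V ** X U ** adj cj V) $ k $ l \<partial>M)"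
proof -
  have "Q i j k l = (\<integral>U. X (V ** U) $ i $ j * X (V ** U) $ k $ l \<partial>M)"
    unfolding Q_def
    by (rule invariance[OF V, of "\<lambda>U. X U $ i $ j * X U $ k $ l"])
       (intro borel_measurable_continuous_onI continuous_intros X_cont)
  thus ?thesis by (simp add: X_mult)
qed

end



definition Dg :: "('n \<Rightarrow> 'a::semiring_1) \<Rightarrow> 'a^'n^'n" where
  "Dg d = (\<chi> i j. if i = j then d i else 0)"

definition sw :: "'n \<Rightarrow> 'n \<Rightarrow> 'n \<Rightarrow> 'n" where
  "sw a b i = (if i = a then b else if i = b then a else i)"

definition Tm :: "'n \<Rightarrow> 'n \<Rightarrow> 'a::semiring_1^'n^'n" where
  "Tm a b = (\<chi> i j. if sw a b i = j then 1 else 0)"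

lemma sw_sw[simp]: "sw a b (sw a b i) = i" by (simp add: sw_def)
lemma sw_eq_iff: "sw a b i = j \<longleftrightarrow> i = sw a b j" by (auto simp: sw_def)
lemma sw_inj: "sw a b i = sw a b j \<longleftrightarrow> i = j" by (metis sw_sw)

lemma sum_delta_mult: "(\<Sum>k\<in>(UNIV::'n::finite set). (if i = k then g k else 0) * f k) = g i * (f i :: 'a::semiring_1)"
proof -
  have "(\<Sum>k\<in>(UNIV::'n set). (if i = k then g k else 0) * f k) = (\<Sum>k\<in>(UNIV::'n set). if i = k then g i * f i else 0)" by (intro sum.cong) auto
  thus ?thesis by simp
qed
lemma sum_delta_mult2: "(\<Sum>k\<in>(UNIV::'n::finite set). f k * (if k = j then g k else 0)) = f j * (g j :: 'a::semiring_1)"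
proof -
  have "(\<Sum>k\<in>(UNIV::'n set). f k * (if k = j then g k else 0)) = (\<Sum>k\<in>(UNIV::'n set). if k = j then f j * g j else 0)" by (intro sum.cong) auto
  thus ?thesis by simp
qed

context cjf begin

lemma Dg_left: "(Dg d ** A) $ i $ j = d i * A $ i $ j"
  by (simp add: Dg_def matrix_matrix_mult_def sum_delta_mult)
lemma adj_Dg: "adj cj (Dg d) = Dg (\<lambda>i. cj (d i))"
  by (simp add: Dg_def adj_def vec_eq_iff)
lemma Dg_right: "(A ** Dg d) $ i $ j = A $ i $ j * d j"
  by (simp add: Dg_def matrix_matrix_mult_def sum_delta_mult2)
lemma Dg_unit: "(\<And>i. d i * cj (d i) = 1) \<Longrightarrow> Dg d \<in> unitary_grp cj"
  unfolding unitary_grp_def mem_Collect_eq adj_Dg by (simp add: vec_eq_iff Dg_right) (simp add: mat_def Dg_def)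
lemma Dg_conj: "(Dg d ** A ** adj cj (Dg d)) $ i $ j = d i * A $ i $ j * cj (d j)"
  by (simp add: adj_Dg Dg_right Dg_left)

lemma Tm_left: "(Tm a b ** A) $ i $ j = A $ (sw a b i) $ j"
  by (simp add: Tm_def matrix_matrix_mult_def sum_delta_mult)
lemma adj_Tm: "adj cj (Tm a b) = Tm a b"
  by (auto simp: Tm_def adj_def vec_eq_iff sw_def)
lemma Tm_right: "(A ** Tm a b) $ i $ j = A $ i $ (sw a b j)"
  unfolding Tm_def matrix_matrix_mult_def vec_lambda_beta
  by (simp only: sw_eq_iff sum_delta_mult2 mult_1_right)
lemma Tm_unit: "Tm a b \<in> unitary_grp cj"
  unfolding unitary_grp_def mem_Collect_eq adj_Tm by (simp add: vec_eq_iff Tm_right) (simp add: mat_def Tm_def sw_inj)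
lemma Tm_conj: "(Tm a b ** A ** adj cj (Tm a b)) $ i $ j = A $ (sw a b i) $ (sw a b j)"
  by (simp add: adj_Tm Tm_right Tm_left)

end




lemma sum_two: assumes "p \<noteq> q"
  shows "(\<Sum>k\<in>(UNIV::'n::finite set). (if k = p then a else if k = q then b else 0) * g k) = a * g p + b * (g q :: 'a::semiring_1)"
(is "?lhs = ?rhs")
proof -
  have "(\<Sum>k\<in>UNIV. (if k = p then a else if k = q then b else 0) * g k) = (\<Sum>k\<in>UNIV. (if k = p then a * g p else 0) + (if k = q then b * g q else 0))"
    using assms by (intro sum.cong) auto
  also have "\<dots> = ?rhs" by (simp add: sum.distrib)
  finally show ?thesis .
qed

lemma sum_two2: assumes "p \<noteq> q"
  shows "(\<Sum>k\<in>(UNIV::'n::finite set). g k * (if k = p then a else if k = q then b else 0)) = g p * a + g q * (b :: 'a::semiring_1)"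
(is "?lhs = ?rhs")
proof -
  have "(\<Sum>k\<in>UNIV. g k * (if k = p then a else if k = q then b else 0)) = (\<Sum>k\<in>UNIV. (if k = p then g p * a else 0) + (if k = q then g q * b else 0))"
    using assms by (intro sum.cong) auto
  also have "\<dots> = ?rhs" by (simp add: sum.distrib)
  finally show ?thesis .
qed

definition hs :: "'a::real_normed_field" where "hs = of_real (sqrt 2 / 2)"

lemma hs_sq: "hs * hs = (1/2::'a::real_normed_field)"
proof -
  have "sqrt 2 / 2 * (sqrt 2 / 2) = (1/2::real)" by (simp add: field_simps)
  hence "(of_real (sqrt 2 / 2 * (sqrt 2 / 2)) :: 'a) = of_real (1/2)" by (rule arg_cong)
  hence "(of_real (sqrt 2 / 2) :: 'a) * of_real (sqrt 2 / 2) = of_real (1/2)" by (simp only: of_real_mult)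
  thus ?thesis unfolding hs_def by simp
qed

lemma sum_delta_mult3: "(\<Sum>k\<in>(UNIV::'n::finite set). f k * (if j = k then g k else 0)) = f j * (g j :: 'a::semiring_1)"
proof -
  have "(\<Sum>k\<in>(UNIV::'n set). f k * (if j = k then g k else 0)) = (\<Sum>k\<in>(UNIV::'n set). if j = k then f j * g j else 0)" by (intro sum.cong) auto
  thus ?thesis by simp
qed

definition Rt :: "'n \<Rightarrow> 'n \<Rightarrow> 'a::real_normed_field^'n^'n" where
 "Rt p q = (\<chi> i k. if i = p then (if k = p then hs else if k = q then - hs else 0)
    else if i = q then (if k = p then hs else if k = q then hs else 0)
    else if i = k then 1 else 0)"

lemma Rt_left: assumes "p \<noteq> q"
  shows "(Rt p q ** A) $ i $ j = (if i = p then hs * A$p$j - hs * A$q$j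
     else if i = q then hs * A$p$j + hs * A$q$j else A$i$j)"
proof -
  have e: "Rt p q $ i' $ k = (if i' = p then (if k = p then hs else if k = q then - hs else 0)
    else if i' = q then (if k = p then hs else if k = q then hs else 0)
    else if i' = k then 1 else 0)" for i' k by (simp add: Rt_def)
  show ?thesis
  proof (cases "i = p")
    case True thus ?thesis using assms by (simp add: matrix_matrix_mult_def e sum_two)
  next
    case F1: False show ?thesis
    proof (cases "i = q")
      case True thus ?thesis using assms F1 by (simp add: matrix_matrix_mult_def e sum_two)
    next
      case False thus ?thesis using assms F1 by (simp add: matrix_matrix_mult_def e sum_delta_mult)
    qed
  qed
qed

context cjf begin

lemma cj_hs: "cj hs = hs" unfolding hs_def by (rule cj_of_real)

lemma adj_Rt: "adj cj (Rt p q) $ i $ j = Rt p q $ j $ i"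
  by (simp add: adj_def Rt_def if_distrib[of cj] cj_hs cj_minus)

lemma Rt_right: assumes "p \<noteq> q"
  shows "(A ** adj cj (Rt p q)) $ i $ j = (if j = p then A$i$p * hs - A$i$q * hs
     else if j = q then A$i$p * hs + A$i$q * hs else A$i$j)"
proof -
  have e: "adj cj (Rt p q) $ k $ j' = (if j' = p then (if k = p then hs else if k = q then - hs else 0)
    else if j' = q then (if k = p then hs else if k = q then hs else 0)
    else if j' = k then 1 else 0)" for j' k unfolding adj_Rt by (simp add: Rt_def)
  show ?thesis
  proof (cases "j = p")
    case True thus ?thesis using assms by (simp add: matrix_matrix_mult_def e sum_two2)
  next
    case F1: False show ?thesis
    proof (cases "j = q")
      case True thus ?thesis using assms F1 by (simp add: matrix_matrix_mult_def e sum_two2)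
    next
      case False thus ?thesis using assms F1 by (simp add: matrix_matrix_mult_def e sum_delta_mult3)
    qed
  qed
qed

lemma Rt_unit: assumes "p \<noteq> q" shows "Rt p q \<in> unitary_grp cj"
proof -
  have "(Rt p q ** adj cj (Rt p q)) $ i $ j = mat 1 $ i $ j" for i j
    using assms unfolding Rt_right[OF assms]
    by (cases "i = p"; cases "i = q"; cases "j = p"; cases "j = q")
       (simp_all add: Rt_def mat_def hs_sq)
  thus ?thesis by (simp add: vec_eq_iff unitary_grp_def)
qed

lemma Rt_conj: assumes "p \<noteq> q"
  shows "(Rt p q ** A ** adj cj (Rt p q)) $ p $ p = (A$p$p - A$p$q - A$q$p + A$q$q) / 2"
proof -
  have "(Rt p q ** A ** adj cj (Rt p q)) $ p $ p = (hs * A$p$p - hs * A$q$p) * hs - (hs * A$p$q - hs * A$q$q) * hs"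
    using assms by (simp add: Rt_right Rt_left)
  also have "\<dots> = (hs * hs) * (A$p$p - A$p$q - A$q$p + A$q$q)" by (simp add: algebra_simps)
  finally show ?thesis by (simp add: hs_sq)
qed

end






lemma trace_idem_rank:
  fixes P :: "'a::field^'n^'n"
  assumes PP: "P ** P = P"
  shows "trace P = of_nat (rank P)"
proof -
  obtain B where B: "B \<subseteq> rows P" "vec.independent B" "rows P \<subseteq> vec.span B" "card B = vec.dim (rows P)"
    using vec.basis_exists by blast
  have fin: "finite B" using B(2) vec.finiteI_independent by blast
  define R where "R = vec.representation B"
  have rowsp: "P $ k \<in> vec.span B" for k
    using B(3) by (auto simp: rows_def row_def)
  have rowP: "P $ k = (\<Sum>b\<in>B. R (P $ k) b *s b)" for k
    unfolding R_def using vec.sum_representation_eq[OF B(2) rowsp fin, of k] by simp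
  have bfix: "b = (\<Sum>k\<in>UNIV. b $ k *s P $ k)" if bB: "b \<in> B" for b
  proof -
    obtain i where bi: "b = P $ i" using B(1) bB by (auto simp: rows_def row_def)
    have "b = (P ** P) $ i" using PP bi by simp
    also have "\<dots> = (\<Sum>k\<in>UNIV. b $ k *s P $ k)"
      by (simp add: vec_eq_iff bi matrix_matrix_mult_def mult.commute)
    finally show ?thesis .
  qed
  have one: "(\<Sum>k\<in>UNIV. b $ k * R (P $ k) b) = 1" if "b \<in> B" for b
  proof -
    have "R b = R (\<Sum>k\<in>UNIV. b $ k *s P $ k)" using bfix[OF that] by metis
    also have "\<dots> = (\<lambda>c. \<Sum>k\<in>UNIV. b $ k * R (P $ k) c)"
      unfolding R_def
      by (subst vec.representation_sum[OF B(2)]) (auto intro: vec.span_scale rowsp simp: vec.representation_scale[OF B(2) rowsp])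
    finally have "R b b = (\<Sum>k\<in>UNIV. b $ k * R (P $ k) b)" by metis
    moreover have "R b b = 1" unfolding R_def using vec.representation_basis[OF B(2) that] by simp
    ultimately show ?thesis by simp
  qed
  have "trace P = (\<Sum>k\<in>UNIV. P $ k $ k)" by (simp add: trace_def)
  also have "\<dots> = (\<Sum>k\<in>UNIV. \<Sum>b\<in>B. R (P $ k) b * b $ k)"
    by (subst rowP) (simp add: sum_component)
  also have "\<dots> = (\<Sum>b\<in>B. \<Sum>k\<in>UNIV. b $ k * R (P $ k) b)"
    by (subst sum.swap) (simp add: mult.commute)
  also have "\<dots> = (\<Sum>b\<in>B. 1)" using one by simp
  also have "\<dots> = of_nat (card B)" by simp
  finally show ?thesis using B(4) by (simp add: row_rank_def_gen)
qed

lemma gen1: assumes "\<And>a b i. h i = h (sw a b i)" shows "h i = h p"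
  using assms[of i p i] by (simp add: sw_def)

lemma gen2: assumes g: "\<And>a b i j. g i j = g (sw a b i) (sw a b j)" and ij: "i \<noteq> j" and pq: "p \<noteq> q"
  shows "g i j = g p q"
proof -
  define j' where "j' = sw i p j"
  have 1: "g i j = g p j'" using g[of i j i p] by (simp add: sw_def j'_def)
  have "j' \<noteq> p" using ij by (auto simp: j'_def sw_def)
  hence "g p j' = g p q" using g[of p j' q j' ] pq by (simp add: sw_def)
  thus ?thesis using 1 by simp
qed

context haarctx begin

lemma Q_diag: assumes "\<And>x. d x * cj (d x) = 1"
  shows "Q i j k l = (d i * cj (d j) * d k * cj (d l)) * Q i j k l"
proof -
  have "Q i j k l = (\<integral>U. (Dg d ** X U ** adj cj (Dg d)) $ i $ j * (Dg d ** X U ** adj cj (Dg d)) $ k $ l \<partial>M)"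
    by (rule QV[OF Dg_unit[OF assms]])
  also have "\<dots> = (\<integral>U. (d i * cj (d j) * d k * cj (d l)) * (X U $ i $ j * X U $ k $ l) \<partial>M)"
  proof -
    have "(Dg d ** X U ** adj cj (Dg d)) $ i $ j * (Dg d ** X U ** adj cj (Dg d)) $ k $ l
       = (d i * cj (d j) * d k * cj (d l)) * (X U $ i $ j * X U $ k $ l)" for U
      unfolding Dg_conj by (simp only: mult_ac)
    thus ?thesis by (simp only:)
  qed
  also have "\<dots> = (d i * cj (d j) * d k * cj (d l)) * Q i j k l" unfolding Q_def by (rule integral_mult_right_zero)
  finally show ?thesis .
qed

definition sg :: "'n \<Rightarrow> 'n \<Rightarrow> 'a" where "sg p x = (if x = p then -1 else 1)"

lemma Q_odd: assumes "sg p i * sg p j * sg p k * sg p l = -1" shows "Q i j k l = 0"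
proof -
  have cm: "cj (-1) = -1" using cj_minus[of 1] by (simp only: cj_1)
  have cs: "cj (sg p x) = sg p x" for x by (simp add: sg_def cm)
  have u: "sg p x * cj (sg p x) = 1" for x unfolding cs by (simp add: sg_def)
  have "Q i j k l = (sg p i * sg p j * sg p k * sg p l) * Q i j k l" using Q_diag[OF u, of i j k l] by (simp add: cs)
  hence "Q i j k l = - Q i j k l" using assms by simp
  hence "Q i j k l + Q i j k l = 0" by (metis add.right_inverse)
  hence "2 * Q i j k l = 0" by (metis mult_2)
  thus ?thesis by simp
qed

lemma Q_perm: "Q i j k l = Q (sw a b i) (sw a b j) (sw a b k) (sw a b l)"
proof -
  have "Q i j k l = (\<integral>U. (Tm a b ** X U ** adj cj (Tm a b)) $ i $ j * (Tm a b ** X U ** adj cj (Tm a b)) $ k $ l \<partial>M)"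
    by (rule QV[OF Tm_unit])
  also have "\<dots> = Q (sw a b i) (sw a b j) (sw a b k) (sw a b l)" by (simp add: Tm_conj Q_def)
  finally show ?thesis .
qed

definition Ex where "Ex i j = (\<integral>U. X U $ i $ j \<partial>M)"

lemma Ex_perm: "Ex i i = Ex (sw a b i) (sw a b i)"
proof -
  have "Ex i i = (\<integral>U. X (Tm a b ** U) $ i $ i \<partial>M)"
    unfolding Ex_def
    by (rule invariance[OF Tm_unit, of "\<lambda>U. X U $ i $ i"])
       (intro borel_measurable_continuous_onI X_cont)
  thus ?thesis by (simp add: X_mult Tm_conj Ex_def)
qed

lemma PP: "P ** P = P" using proj by (simp add: orth_proj_def)
lemma adjP: "adj cj P = P" using proj by (simp add: orth_proj_def)

lemma ul3: "U \<in> unitary_grp cj \<Longrightarrow> A ** adj cj U ** U = A"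
  by (simp add: matrix_mul_assoc[symmetric] unitary_left)

lemma PP2: "A ** P ** P = A ** P"
  by (simp add: matrix_mul_assoc[symmetric] PP)

lemma XX: assumes "U \<in> unitary_grp cj" shows "X U ** X U = X U"
  by (simp add: X_def matrix_mul_assoc ul3[OF assms] PP2)

lemma trX: assumes "U \<in> unitary_grp cj" shows "trace (X U) = of_nat (rank P)"
proof -
  have "trace (X U) = trace (adj cj U ** (U ** P))" unfolding X_def by (rule trace_mul_sym)
  also have "\<dots> = trace P" by (simp add: matrix_mul_assoc unitary_left[OF assms])
  finally show ?thesis using trace_idem_rank[OF PP] by simp
qed

lemma adjX: "adj cj (X U) = X U"
  by (simp add: X_def adj_mult adj_adj adjP matrix_mul_assoc)

lemma X_sym: "X U $ j $ i = cj (X U $ i $ j)"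
proof -
  have "X U $ j $ i = adj cj (X U) $ j $ i" by (simp only: adjX)
  also have "\<dots> = cj (X U $ i $ j)" by (simp add: adj_def)
  finally show ?thesis .
qed

lemma Ex_sum: "(\<Sum>r\<in>UNIV. Ex r r) = of_nat (rank P)"
proof -
  have "(\<Sum>r\<in>UNIV. Ex r r) = (\<integral>U. (\<Sum>r\<in>UNIV. X U $ r $ r) \<partial>M)"
    unfolding Ex_def by (simp add: int_entry)
  also have "\<dots> = (\<integral>U. of_nat (rank P) \<partial>M)"
  proof (rule integral_cong_AE)
    show "(\<lambda>U. \<Sum>r\<in>UNIV. X U $ r $ r) \<in> borel_measurable M" by (intro meas_cont continuous_intros X_cont)
    show "(\<lambda>U. of_nat (rank P)) \<in> borel_measurable M" by simp
    show "AE U in M. (\<Sum>r\<in>UNIV. X U $ r $ r) = of_nat (rank P)"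
      using AE_unit by eventually_elim (use trX in \<open>simp add: trace_def\<close>)
  qed
  also have "\<dots> = of_nat (rank P)" using prob_space.prob_space[OF prob] by simp
  finally show ?thesis .
qed

lemma Tr1: "(\<Sum>s\<in>UNIV. Q r r s s) = of_nat (rank P) * Ex r r"
proof -
  have "(\<Sum>s\<in>UNIV. Q r r s s) = (\<integral>U. (\<Sum>s\<in>UNIV. X U $ r $ r * X U $ s $ s) \<partial>M)"
    unfolding Q_def by (simp add: int_prod)
  also have "\<dots> = (\<integral>U. of_nat (rank P) * X U $ r $ r \<partial>M)"
  proof (rule integral_cong_AE)
    show "(\<lambda>U. \<Sum>s\<in>UNIV. X U $ r $ r * X U $ s $ s) \<in> borel_measurable M" by (intro meas_cont continuous_intros X_cont)
    show "(\<lambda>U. of_nat (rank P) * X U $ r $ r) \<in> borel_measurable M" by (intro meas_cont continuous_intros X_cont)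
    show "AE U in M. (\<Sum>s\<in>UNIV. X U $ r $ r * X U $ s $ s) = of_nat (rank P) * X U $ r $ r"
      using AE_unit
    proof eventually_elim
      case (elim U)
      have "(\<Sum>s\<in>UNIV. X U $ r $ r * X U $ s $ s) = X U $ r $ r * trace (X U)" by (simp add: trace_def sum_distrib_left)
      thus ?case using trX[OF elim] by (simp add: mult.commute)
    qed
  qed
  also have "\<dots> = of_nat (rank P) * Ex r r" unfolding Ex_def by (rule integral_mult_right_zero)
  finally show ?thesis .
qed

lemma Tr2: "(\<Sum>s\<in>UNIV. Q r s s r) = Ex r r"
proof -
  have "(\<Sum>s\<in>UNIV. Q r s s r) = (\<integral>U. (\<Sum>s\<in>UNIV. X U $ r $ s * X U $ s $ r) \<partial>M)"
    unfolding Q_def by (simp add: int_prod)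
  also have "\<dots> = (\<integral>U. X U $ r $ r \<partial>M)"
  proof (rule integral_cong_AE)
    show "(\<lambda>U. \<Sum>s\<in>UNIV. X U $ r $ s * X U $ s $ r) \<in> borel_measurable M" by (intro meas_cont continuous_intros X_cont)
    show "(\<lambda>U. X U $ r $ r) \<in> borel_measurable M" by (intro meas_cont continuous_intros X_cont)
    show "AE U in M. (\<Sum>s\<in>UNIV. X U $ r $ s * X U $ s $ r) = X U $ r $ r"
      using AE_unit
    proof eventually_elim
      case (elim U)
      have "(X U ** X U) $ r $ r = X U $ r $ r" using XX[OF elim] by simp
      thus ?case by (simp add: matrix_matrix_mult_def)
    qed
  qed
  finally show ?thesis unfolding Ex_def .
qed

end



locale haarctx2 = haarctx cj M P
  for cj :: "'a::{real_normed_field,euclidean_space} \<Rightarrow> 'a" and M :: "('a^'n^'n) measure" and P +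
  fixes p0 q0 :: 'n
  assumes pq: "p0 \<noteq> q0"
begin

definition "QA = Q p0 p0 p0 p0"
definition "QB1 = Q p0 p0 q0 q0"
definition "QB2 = Q p0 q0 q0 p0"
definition "QC = Q p0 q0 p0 q0"

lemma Q_iiii: "Q i i i i = QA"
  unfolding QA_def by (rule gen1[where h="\<lambda>i. Q i i i i"]) (rule Q_perm)

lemma Q_iijj: "i \<noteq> j \<Longrightarrow> Q i i j j = QB1"
  unfolding QB1_def by (rule gen2[where g="\<lambda>i j. Q i i j j"]) (rule Q_perm, assumption, rule pq)

lemma Q_ijji: "i \<noteq> j \<Longrightarrow> Q i j j i = QB2"
  unfolding QB2_def by (rule gen2[where g="\<lambda>i j. Q i j j i"]) (rule Q_perm, assumption, rule pq)

lemma Q_ijij: "i \<noteq> j \<Longrightarrow> Q i j i j = QC"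
  unfolding QC_def by (rule gen2[where g="\<lambda>i j. Q i j i j"]) (rule Q_perm, assumption, rule pq)

lemma Q_zero: assumes "\<not> (i = j \<and> k = l)" "\<not> (i = l \<and> j = k)" "\<not> (i = k \<and> j = l)"
  shows "Q i j k l = 0"
proof -
  have "sg i i * sg i j * sg i k * sg i l = -1 \<or> sg j i * sg j j * sg j k * sg j l = -1 \<or> sg k i * sg k j * sg k k * sg k l = -1"
    using assms by (auto simp: sg_def)
  thus ?thesis using Q_odd by blast
qed

lemma rot: "QA = QB1 + QB2 + QC"
proof -
  let ?a = "\<lambda>U. X U $ p0 $ p0" and ?b = "\<lambda>U. X U $ p0 $ q0" and ?c = "\<lambda>U. X U $ q0 $ p0" and ?d = "\<lambda>U. X U $ q0 $ q0"
  have "QA = (\<integral>U. (Rt p0 q0 ** X U ** adj cj (Rt p0 q0)) $ p0 $ p0 * (Rt p0 q0 ** X U ** adj cj (Rt p0 q0)) $ p0 $ p0 \<partial>M)"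
    unfolding QA_def by (rule QV[OF Rt_unit[OF pq]])
  also have "\<dots> = (\<integral>U. (1/4) * (?a U * ?a U - ?a U * ?b U - ?a U * ?c U + ?a U * ?d U
       - ?b U * ?a U + ?b U * ?b U + ?b U * ?c U - ?b U * ?d U
       - ?c U * ?a U + ?c U * ?b U + ?c U * ?c U - ?c U * ?d U
       + ?d U * ?a U - ?d U * ?b U - ?d U * ?c U + ?d U * ?d U) \<partial>M)"
  proof -
    have "(Rt p0 q0 ** X U ** adj cj (Rt p0 q0)) $ p0 $ p0 * (Rt p0 q0 ** X U ** adj cj (Rt p0 q0)) $ p0 $ p0 =
      (1/4) * (?a U * ?a U - ?a U * ?b U - ?a U * ?c U + ?a U * ?d U
       - ?b U * ?a U + ?b U * ?b U + ?b U * ?c U - ?b U * ?d U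
       - ?c U * ?a U + ?c U * ?b U + ?c U * ?c U - ?c U * ?d U
       + ?d U * ?a U - ?d U * ?b U - ?d U * ?c U + ?d U * ?d U)" for U
    proof -
      have e: "(Rt p0 q0 ** X U ** adj cj (Rt p0 q0)) $ p0 $ p0 = (1/2) * (?a U - ?b U - ?c U + ?d U)"
        using Rt_conj[OF pq, of "X U"] by simp
      show ?thesis unfolding e by (simp add: algebra_simps)
    qed
    thus ?thesis by (simp only:)
  qed
  also have "\<dots> = (1/4) * (2 * QA + 2 * QB1 + 2 * QB2 + 2 * QC)"
    using pq pq[symmetric] by (simp add: int_prod Q_def[symmetric] Q_iiii Q_iijj Q_ijji Q_ijij Q_zero)
  finally have h: "QA = (1/4) * (2 * QA + 2 * QB1 + 2 * QB2 + 2 * QC)" .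
  have "2 * QA = 2 * ((1/4) * (2 * QA + 2 * QB1 + 2 * QB2 + 2 * QC))" using h by (rule arg_cong)
  also have "\<dots> = QA + (QB1 + QB2 + QC)" by (simp add: field_simps)
  finally have "QA + QA = QA + (QB1 + QB2 + QC)" by (simp only: mult_2)
  thus ?thesis by simp
qed

lemma Q_struct: "Q i j k l = (if i = j \<and> k = l then QB1 else 0) + (if i = l \<and> j = k then QB2 else 0)
   + (if i = k \<and> j = l then QC else 0)"
  by (cases "i = j"; cases "i = k"; cases "i = l"; cases "j = k"; cases "j = l"; cases "k = l")
     (simp_all add: Q_iiii Q_iijj Q_ijji Q_ijij Q_zero rot)

definition "mm = (of_nat CARD('n) :: 'a)"
definition "tt = (of_nat (rank P) :: 'a)"

lemma mm_nz: "mm \<noteq> 0" by (simp add: mm_def)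

lemma Ex_val: "Ex r r = tt / mm"
proof -
  have e: "Ex r r = Ex p0 p0" for r by (rule gen1[where h="\<lambda>i. Ex i i"]) (rule Ex_perm)
  have "tt = (\<Sum>r\<in>UNIV. Ex r r)" using Ex_sum by (simp add: tt_def)
  also have "\<dots> = (\<Sum>r\<in>(UNIV::'n set). Ex p0 p0)" by (intro sum.cong refl e)
  also have "\<dots> = mm * Ex p0 p0" by (simp add: mm_def)
  finally show ?thesis using mm_nz e[of r] by (simp add: field_simps)
qed

lemma sum_split: "(\<Sum>s\<in>UNIV. f s) = f p0 + (\<Sum>s\<in>UNIV - {p0}. f (s::'n))"
  by (simp add: sum.remove)

lemma card_rest: "of_nat (card (UNIV - {p0::'n})) = mm - 1"
  by (simp add: mm_def card_Diff_singleton of_nat_diff Suc_le_eq)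

lemma R2: "QA + (mm - 1) * QB1 = tt * (tt / mm)"
proof -
  have "(\<Sum>s\<in>UNIV. Q p0 p0 s s) = QA + (\<Sum>s\<in>UNIV - {p0}. QB1)"
    by (subst sum_split) (simp add: Q_iiii Q_iijj)
  also have "\<dots> = QA + (mm - 1) * QB1" using card_rest by simp
  finally show ?thesis using Tr1[of p0] Ex_val by (simp add: tt_def)
qed

lemma R3: "QA + (mm - 1) * QB2 = tt / mm"
proof -
  have "(\<Sum>s\<in>UNIV. Q p0 s s p0) = QA + (\<Sum>s\<in>UNIV - {p0}. QB2)"
    by (subst sum_split) (simp add: Q_iiii Q_ijji)
  also have "\<dots> = QA + (mm - 1) * QB2" using card_rest by simp
  finally show ?thesis using Tr2[of p0] Ex_val by simp
qed

lemma QC_real: assumes "\<And>x. cj x = x" shows "QC = QB2"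
proof -
  have "X U $ q0 $ p0 = X U $ p0 $ q0" for U using X_sym[of U p0 q0] assms by simp
  thus ?thesis unfolding QC_def QB2_def Q_def by simp
qed

lemma QC_cplx: assumes "w * cj w = 1" "w * w = -1" shows "QC = 0"
proof -
  define d where "d x = (if x = p0 then w else 1)" for x
  have u: "d x * cj (d x) = 1" for x using assms by (simp add: d_def)
  have "QC = (d p0 * cj (d q0) * d p0 * cj (d q0)) * QC" unfolding QC_def by (rule Q_diag[OF u])
  hence "QC = - QC" using assms pq by (simp add: d_def)
  hence "QC + QC = 0" by (metis add.right_inverse)
  hence "2 * QC = 0" by (metis mult_2)
  thus ?thesis by simp
qed

end

context cjf begin

lemma onb_complete: fixes e :: "'n::finite \<Rightarrow> 'a^'n" assumes "orthonormal_family cj e"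
  shows "(\<Sum>j\<in>UNIV. e j $ a * cj (e j $ b)) = (if a = b then 1 else 0)"
proof -
  define E :: "'a^'n^'n" where "E = (\<chi> j i. e j $ i)"
  have "E ** adj cj E = mat 1"
    using assms by (simp add: vec_eq_iff E_def matrix_matrix_mult_def adj_def orthonormal_family_def mat_def)
  hence "adj cj E ** E = mat 1" using matrix_left_right_inverse by blast
  hence "(adj cj E ** E) $ b $ a = (if a = b then 1 else 0)" by (simp add: mat_def)
  thus ?thesis by (simp add: E_def matrix_matrix_mult_def adj_def mult.commute)
qed

lemma sum_minus_diag: "(\<Sum>j'\<in>UNIV - {j}. f j') = (\<Sum>j'\<in>UNIV. f j') - (f (j::'n::finite) :: 'a)"
  by (simp add: sum_diff1)

lemma target_entry:
  fixes a b c :: real and e :: "'n::finite \<Rightarrow> 'a^'n"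
  assumes onb: "orthonormal_family cj e" and abc: "a = 2 * b + c"
  shows "(a *\<^sub>R (\<Sum>j\<in>UNIV. kron (Eunit cj e j j) (Eunit cj e j j))
          + (\<Sum>j\<in>UNIV. \<Sum>j'\<in>UNIV - {j}.
               b *\<^sub>R (kron (Eunit cj e j j') (Eunit cj e j' j) + kron (Eunit cj e j j) (Eunit cj e j' j'))
               + c *\<^sub>R kron (Eunit cj e j j') (Eunit cj e j j'))) $ r $ s
   = of_real b * ((if fst r = snd s \<and> fst s = snd r then 1 else 0) + (if fst r = fst s \<and> snd r = snd s then 1 else 0))
     + of_real c * (\<Sum>j\<in>UNIV. \<Sum>j'\<in>UNIV. e j $ fst r * e j $ snd r * (cj (e j' $ fst s) * cj (e j' $ snd s)))"
proof -
  obtain r1 r2 where r: "r = (r1, r2)" by (cases r)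
  obtain s1 s2 where s: "s = (s1, s2)" by (cases s)
  define T1 where "T1 j j' = e j $ r1 * cj (e j' $ s1) * (e j' $ r2 * cj (e j $ s2))" for j j'
  define T2 where "T2 j j' = e j $ r1 * cj (e j $ s1) * (e j' $ r2 * cj (e j' $ s2))" for j j'
  define T3 where "T3 j j' = e j $ r1 * cj (e j' $ s1) * (e j $ r2 * cj (e j' $ s2))" for j j'
  define F where "F j j' = of_real b * (T1 j j' + T2 j j') + of_real c * T3 j j'" for j j'
  have lhs: "(a *\<^sub>R (\<Sum>j\<in>UNIV. kron (Eunit cj e j j) (Eunit cj e j j))
          + (\<Sum>j\<in>UNIV. \<Sum>j'\<in>UNIV - {j}.
               b *\<^sub>R (kron (Eunit cj e j j') (Eunit cj e j' j) + kron (Eunit cj e j j) (Eunit cj e j' j'))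
               + c *\<^sub>R kron (Eunit cj e j j') (Eunit cj e j j'))) $ r $ s
     = of_real a * (\<Sum>j\<in>UNIV. T2 j j) + (\<Sum>j\<in>UNIV. \<Sum>j'\<in>UNIV - {j}. F j j')"
    by (simp add: r s kron_def Eunit_def) (simp add: scaleR_conv_of_real T1_def T2_def T3_def F_def)
  have diag: "F j j = of_real a * T2 j j" for j
    by (simp add: F_def T1_def T2_def T3_def abc algebra_simps)
  have "(\<Sum>j\<in>UNIV. \<Sum>j'\<in>UNIV - {j}. F j j') = (\<Sum>j\<in>UNIV. \<Sum>j'\<in>UNIV. F j j') - of_real a * (\<Sum>j\<in>UNIV. T2 j j)"
    by (simp add: sum_minus_diag sum_subtractf diag sum_distrib_left)
  hence L: "(a *\<^sub>R (\<Sum>j\<in>UNIV. kron (Eunit cj e j j) (Eunit cj e j j))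
          + (\<Sum>j\<in>UNIV. \<Sum>j'\<in>UNIV - {j}.
               b *\<^sub>R (kron (Eunit cj e j j') (Eunit cj e j' j) + kron (Eunit cj e j j) (Eunit cj e j' j'))
               + c *\<^sub>R kron (Eunit cj e j j') (Eunit cj e j j'))) $ r $ s = (\<Sum>j\<in>UNIV. \<Sum>j'\<in>UNIV. F j j')"
    using lhs by simp
  have S1: "(\<Sum>j\<in>UNIV. \<Sum>j'\<in>UNIV. T1 j j') = (if r1 = s2 \<and> s1 = r2 then 1 else 0)"
  proof -
    have "(\<Sum>j\<in>UNIV. \<Sum>j'\<in>UNIV. T1 j j') = (\<Sum>j\<in>UNIV. e j $ r1 * cj (e j $ s2)) * (\<Sum>j'\<in>UNIV. e j' $ r2 * cj (e j' $ s1))"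
      by (simp add: T1_def sum_product mult_ac)
    thus ?thesis by (auto simp: onb_complete[OF onb])
  qed
  have S2: "(\<Sum>j\<in>UNIV. \<Sum>j'\<in>UNIV. T2 j j') = (if r1 = s1 \<and> r2 = s2 then 1 else 0)"
  proof -
    have "(\<Sum>j\<in>UNIV. \<Sum>j'\<in>UNIV. T2 j j') = (\<Sum>j\<in>UNIV. e j $ r1 * cj (e j $ s1)) * (\<Sum>j'\<in>UNIV. e j' $ r2 * cj (e j' $ s2))"
      by (simp add: T2_def sum_product mult_ac)
    thus ?thesis by (simp add: onb_complete[OF onb])
  qed
  have S3: "(\<Sum>j\<in>UNIV. \<Sum>j'\<in>UNIV. T3 j j') = (\<Sum>j\<in>UNIV. \<Sum>j'\<in>UNIV. e j $ r1 * e j $ r2 * (cj (e j' $ s1) * cj (e j' $ s2)))"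
    by (simp add: T3_def mult_ac)
  have "(\<Sum>j\<in>UNIV. \<Sum>j'\<in>UNIV. F j j') = of_real b * ((\<Sum>j\<in>UNIV. \<Sum>j'\<in>UNIV. T1 j j') + (\<Sum>j\<in>UNIV. \<Sum>j'\<in>UNIV. T2 j j'))
       + of_real c * (\<Sum>j\<in>UNIV. \<Sum>j'\<in>UNIV. T3 j j')"
    by (simp add: F_def sum.distrib sum_distrib_left distrib_left)
  thus ?thesis using L S1 S2 S3 by (simp add: r s)
qed

end

context cjf begin

lemma coh_formula:
  fixes M :: "('a^'n::finite^'n) measure" and P :: "'a^'n^'n"
  assumes haar: "haar_prob cj M" and pP: "orth_proj cj P" and pq: "p0 \<noteq> (q0::'n)"
  shows "\<exists>B1 B2 C. (\<forall>r s. coh2 cj M P $ r $ s = (if fst r = fst s \<and> snd r = snd s then B1 else 0)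
            + (if fst r = snd s \<and> fst s = snd r then B2 else 0) + (if fst r = snd r \<and> fst s = snd s then C else 0))
     \<and> B1 + B2 + C + (of_nat CARD('n) - 1) * B1 = of_nat (rank P) * (of_nat (rank P) / of_nat CARD('n))
     \<and> B1 + B2 + C + (of_nat CARD('n) - 1) * B2 = of_nat (rank P) / of_nat CARD('n)
     \<and> ((\<forall>x. cj x = x) \<longrightarrow> C = B2) \<and> (\<forall>w. w * cj w = 1 \<and> w * w = -1 \<longrightarrow> C = 0)"
proof -
  interpret H: haarctx2 cj M P p0 q0
    by (intro haarctx2.intro haarctx.intro haarctx_axioms.intro haarctx2_axioms.intro cjf_axioms haar pP pq)
  show ?thesis
  proof (intro exI conjI allI impI)
    fix r s
    show "coh2 cj M P $ r $ s = (if fst r = fst s \<and> snd r = snd s then H.QB1 else 0)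
            + (if fst r = snd s \<and> fst s = snd r then H.QB2 else 0) + (if fst r = snd r \<and> fst s = snd s then H.QC else 0)"
      unfolding H.coh_entry H.Q_struct by (simp add: eq_commute)
  next
    show "H.QB1 + H.QB2 + H.QC + (of_nat CARD('n) - 1) * H.QB1 = of_nat (rank P) * (of_nat (rank P) / of_nat CARD('n))"
      using H.R2 H.rot by (simp add: H.mm_def H.tt_def)
  next
    show "H.QB1 + H.QB2 + H.QC + (of_nat CARD('n) - 1) * H.QB2 = of_nat (rank P) / of_nat CARD('n)"
      using H.R3 H.rot by (simp add: H.mm_def H.tt_def)
  next
    assume "\<forall>x. cj x = x" thus "H.QC = H.QB2" using H.QC_real by blast
  next
    fix w assume "w * cj w = 1 \<and> w * w = -1" thus "H.QC = 0" using H.QC_cplx by blast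
  qed
qed

end

lemma solve_sys:
  fixes B1 B2 C m t k :: "'a::field"
  assumes m0: "m \<noteq> 0" and m1: "m - 1 \<noteq> 0" and mk: "m + 1 + k \<noteq> 0" and Cd: "C = k * B2"
    and e2: "B1 + B2 + C + (m - 1) * B1 = t * (t / m)" and e3: "B1 + B2 + C + (m - 1) * B2 = t / m"
  shows "B1 = B2 + t * (t - 1) / (m * (m - 1))" and "B2 = (t / m - t * (t - 1) / (m * (m - 1))) / (m + 1 + k)"
proof -
  have "(m - 1) * (B1 - B2) = t * (t / m) - t / m"
  proof -
    have "(m - 1) * (B1 - B2) = (B1 + B2 + C + (m - 1) * B1) - (B1 + B2 + C + (m - 1) * B2)"
      by (simp add: algebra_simps)
    thus ?thesis using e2 e3 by simp
  qed
  hence "B1 - B2 = (t * (t / m) - t / m) / (m - 1)" using m1 by (simp add: field_simps)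
  also have "\<dots> = t * (t - 1) / (m * (m - 1))" using m0 m1 by (simp add: field_simps)
  finally show b1: "B1 = B2 + t * (t - 1) / (m * (m - 1))" by (simp add: algebra_simps)
  have "t / m = (B2 + t * (t - 1) / (m * (m - 1))) + B2 + k * B2 + (m - 1) * B2" using e3 b1 Cd by simp
  also have "\<dots> = t * (t - 1) / (m * (m - 1)) + (m + 1 + k) * B2" by (simp add: algebra_simps)
  finally have "(m + 1 + k) * B2 = t / m - t * (t - 1) / (m * (m - 1))" by (simp add: algebra_simps)
  thus "B2 = (t / m - t * (t - 1) / (m * (m - 1))) / (m + 1 + k)" using mk by (simp add: field_simps)
qed

lemma real_a: assumes "m \<ge> 2"
  shows "(dF_real m + (real m - 1)^2) / ((real m)^2 * dF_real m) / 3 = 1 / (real m * (real m + 2))"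
proof -
  define x where "x = real m"
  have x: "x \<noteq> 0" "x - 1 \<noteq> 0" "x + 2 \<noteq> 0" using assms by (auto simp: x_def)
  have d: "dF_real m = (x + 2) * (x - 1) / 2" by (simp add: dF_real_def x_def)
  have n: "dF_real m + (x - 1)^2 = 3 * x * (x - 1) / 2"
    by (simp add: d power2_eq_square field_simps; simp add: algebra_simps)
  have "(dF_real m + (x - 1)^2) / (x^2 * dF_real m) / 3 = 1 / (x * (x + 2))"
    unfolding n d using x by (simp add: divide_simps power2_eq_square; simp add: algebra_simps)
  thus ?thesis by (simp add: x_def)
qed

lemma complex_a: assumes "m \<ge> 2"
  shows "(dF_complex m + (real m - 1)^2) / ((real m)^2 * dF_complex m) / 2 = 1 / (real m * (real m + 1))"
proof -
  define x where "x = real m"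
  have x: "x \<noteq> 0" "x - 1 \<noteq> 0" "x + 1 \<noteq> 0" using assms by (auto simp: x_def)
  have d: "dF_complex m = (x + 1) * (x - 1)" by (simp add: dF_complex_def x_def power2_eq_square algebra_simps)
  have n: "dF_complex m + (x - 1)^2 = 2 * x * (x - 1)"
    by (simp add: d power2_eq_square; simp add: algebra_simps)
  have "(dF_complex m + (x - 1)^2) / (x^2 * dF_complex m) / 2 = 1 / (x * (x + 1))"
    unfolding n d using x by (simp add: divide_simps power2_eq_square; simp add: algebra_simps)
  thus ?thesis by (simp add: x_def)
qed

interpretation rcj: cjf "id :: real \<Rightarrow> real"
  by unfold_locales (auto simp: power2_eq_square)

interpretation ccj: cjf "cnj"
  by unfold_locales (auto intro: continuous_intros simp del: of_real_power simp: complex_norm_square)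

lemma mat_eqI: "(\<And>r s. A $ r $ s = B $ r $ s) \<Longrightarrow> A = (B :: 'a^'b^'c)"
  by (simp add: vec_eq_iff)

context cjf begin

lemma T3_real: fixes e :: "'n::finite \<Rightarrow> 'a^'n"
  assumes onb: "orthonormal_family cj e" and idc: "\<forall>x. cj x = x"
  shows "(\<Sum>j\<in>UNIV. \<Sum>j'\<in>UNIV. e j $ r1 * e j $ r2 * (cj (e j' $ s1) * cj (e j' $ s2)))
     = (if r1 = r2 \<and> s1 = s2 then 1 else 0)"
proof -
  have "(\<Sum>j\<in>UNIV. \<Sum>j'\<in>UNIV. e j $ r1 * e j $ r2 * (cj (e j' $ s1) * cj (e j' $ s2)))
     = (\<Sum>j\<in>UNIV. e j $ r1 * cj (e j $ r2)) * (\<Sum>j'\<in>UNIV. e j' $ s1 * cj (e j' $ s2))"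
    using idc by (simp add: sum_product)
  thus ?thesis by (simp add: onb_complete[OF onb])
qed

lemma gen1e: "(if A then y else 0) + (if D then y else 0) + (if E then z else 0)
   = y * ((if D then 1 else 0) + (if A then 1 else 0)) + (if E then z else (0::'a))"
  by (cases A; cases D) simp_all

lemma gen2e: "(if A then l * y + u else 0) + (if D then l * y else 0) + (if E then l * z else 0)
   = l * ((if A then y else 0) + (if D then y else 0) + (if E then z else 0)) + u * (if A then 1 else (0::'a))"
  by (cases A; cases D; cases E) (simp_all add: algebra_simps)

lemma final_generic:
  fixes \<kappa> a b c :: real and M :: "('a^'n::finite^'n) measure" and P P1 :: "'a^'n^'n" and e :: "'n \<Rightarrow> 'a^'n"
  assumes m2: "CARD('n) \<ge> 2" and haar: "haar_prob cj M" and pP: "orth_proj cj P" and pP1: "orth_proj cj P1"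
    and rP1: "rank P1 = 1" and onb: "orthonormal_family cj e"
    and kap: "(\<kappa> = 1 \<and> (\<forall>x. cj x = x)) \<or> (\<kappa> = 0 \<and> (\<exists>w. w * cj w = 1 \<and> w * w = -1))"
    and bdef: "b = 1 / (real CARD('n) * (real CARD('n) + 1 + \<kappa>))" and cdef: "c = \<kappa> * b" and adef: "a = 2 * b + c"
  shows "coh2 cj M P = (real (rank P) - real (rank P) * (real (rank P) - 1) / (real CARD('n) - 1)) *\<^sub>R coh2 cj M P1
                      + (real (rank P) * (real (rank P) - 1) / (real CARD('n) * (real CARD('n) - 1))) *\<^sub>R kron (mat 1) (mat 1)
      \<and> coh2 cj M P1 = a *\<^sub>R (\<Sum>j\<in>UNIV. kron (Eunit cj e j j) (Eunit cj e j j))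
          + (\<Sum>j\<in>UNIV. \<Sum>j'\<in>UNIV - {j}.
               b *\<^sub>R (kron (Eunit cj e j j') (Eunit cj e j' j) + kron (Eunit cj e j j) (Eunit cj e j' j'))
               + c *\<^sub>R kron (Eunit cj e j j') (Eunit cj e j j'))"
proof -
  obtain p0 q0 :: 'n where pq: "p0 \<noteq> q0"
  proof -
    have "\<not> card (UNIV :: 'n set) \<le> Suc 0" using m2 by simp
    then obtain x y :: 'n where "x \<noteq> y" using card_le_Suc0_iff_eq[of "UNIV :: 'n set"] by auto
    thus ?thesis using that by blast
  qed
  define m :: real where "m = real CARD('n)"
  define mm :: 'a where "mm = of_nat CARD('n)"
  define tt :: 'a where "tt = of_nat (rank P)"
  define k :: 'a where "k = of_real \<kappa>"
  have mmr: "mm = of_real m" by (simp add: mm_def m_def)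
  have m2r: "m \<ge> 2" using m2 by (simp add: m_def)
  have kap': "\<kappa> \<ge> 0" using kap by auto
  have mm0: "mm \<noteq> 0" by (simp add: mm_def)
  have mm1: "mm - 1 \<noteq> 0"
  proof -
    have "m - 1 \<noteq> 0" using m2r by simp
    hence "(of_real (m - 1) :: 'a) \<noteq> 0" by simp
    thus ?thesis by (simp add: mmr)
  qed
  have mmk: "mm + 1 + k \<noteq> 0"
  proof -
    have "m + 1 + \<kappa> \<noteq> 0" using m2r kap' by simp
    hence "(of_real (m + 1 + \<kappa>) :: 'a) \<noteq> 0" by (simp only: of_real_eq_0_iff not_False_eq_True)
    thus ?thesis by (simp add: mmr k_def)
  qed
  have Crel: "C = k * B2" if "(\<forall>x. cj x = x) \<longrightarrow> C = B2" "\<forall>w. w * cj w = 1 \<and> w * w = -1 \<longrightarrow> C = 0" for B2 C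
    using kap that by (auto simp: k_def)
  obtain B1 B2 C where K: "\<And>r s. coh2 cj M P $ r $ s = (if fst r = fst s \<and> snd r = snd s then B1 else 0)
            + (if fst r = snd s \<and> fst s = snd r then B2 else 0) + (if fst r = snd r \<and> fst s = snd s then C else 0)"
     and e2: "B1 + B2 + C + (mm - 1) * B1 = tt * (tt / mm)"
     and e3: "B1 + B2 + C + (mm - 1) * B2 = tt / mm" and CB: "C = k * B2"
    using coh_formula[OF haar pP pq] Crel unfolding mm_def tt_def by blast
  obtain B1' B2' C' where K1a: "\<forall>r s. coh2 cj M P1 $ r $ s = (if fst r = fst s \<and> snd r = snd s then B1' else 0)
            + (if fst r = snd s \<and> fst s = snd r then B2' else 0) + (if fst r = snd r \<and> fst s = snd s then C' else 0)"
     and e2'': "B1' + B2' + C' + (mm - 1) * B1' = 1 / mm"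
     and e3': "B1' + B2' + C' + (mm - 1) * B2' = 1 / mm"
     and Cr1: "(\<forall>x. cj x = x) \<longrightarrow> C' = B2'" and Cr2: "\<forall>w. w * cj w = 1 \<and> w * w = -1 \<longrightarrow> C' = 0"
    using coh_formula[OF haar pP1 pq] unfolding rP1 mm_def of_nat_1 mult_1
    by blast
  note K1 = K1a[rule_format]
  have CB': "C' = k * B2'" using Crel[OF Cr1 Cr2] .
  have e2': "B1' + B2' + C' + (mm - 1) * B1' = 1 * (1 / mm)" using e2'' by simp
  have s1: "B1 = B2 + tt * (tt - 1) / (mm * (mm - 1))" and s2: "B2 = (tt / mm - tt * (tt - 1) / (mm * (mm - 1))) / (mm + 1 + k)"
    using solve_sys[OF mm0 mm1 mmk CB e2 e3] by auto
  have s1': "B1' = B2'" and s2': "B2' = (1 / mm) / (mm + 1 + k)"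
    using solve_sys[OF mm0 mm1 mmk CB' e2' e3'] by auto
  have bval: "of_real b = B2'"
    by (simp add: bdef s2' mmr k_def m_def)
  have cval: "of_real c = C'" by (simp add: cdef CB' bval k_def)
  define lam :: real where "lam = real (rank P) - real (rank P) * (real (rank P) - 1) / (real CARD('n) - 1)"
  define mu :: real where "mu = real (rank P) * (real (rank P) - 1) / (real CARD('n) * (real CARD('n) - 1))"
  have lamv: "of_real lam = tt - tt * (tt - 1) / (mm - 1)" by (simp add: lam_def tt_def mm_def)
  have muv: "of_real mu = tt * (tt - 1) / (mm * (mm - 1))" by (simp add: mu_def tt_def mm_def)
  have B2v: "B2 = of_real lam * B2'"
    unfolding s2 s2' lamv using mm0 mm1 mmk by (simp add: field_simps)
  have B1v: "B1 = of_real lam * B2' + of_real mu" using s1 B2v muv by simp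
  have Cv: "C = of_real lam * C'" using CB CB' B2v by (simp add: mult_ac)
  have P1eq: "coh2 cj M P1 = a *\<^sub>R (\<Sum>j\<in>UNIV. kron (Eunit cj e j j) (Eunit cj e j j))
          + (\<Sum>j\<in>UNIV. \<Sum>j'\<in>UNIV - {j}.
               b *\<^sub>R (kron (Eunit cj e j j') (Eunit cj e j' j) + kron (Eunit cj e j j) (Eunit cj e j' j'))
               + c *\<^sub>R kron (Eunit cj e j j') (Eunit cj e j j'))"
  proof (rule mat_eqI)
    fix r s :: "'n \<times> 'n"
    have T3: "of_real c * (\<Sum>j\<in>UNIV. \<Sum>j'\<in>UNIV. e j $ fst r * e j $ snd r * (cj (e j' $ fst s) * cj (e j' $ snd s)))
        = (if fst r = snd r \<and> fst s = snd s then C' else 0)"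
      using kap
    proof
      assume h: "\<kappa> = 1 \<and> (\<forall>x. cj x = x)"
      thus ?thesis using T3_real[OF onb, of "fst r" "snd r" "fst s" "snd s"] cval by simp
    next
      assume h: "\<kappa> = 0 \<and> (\<exists>w. w * cj w = 1 \<and> w * w = -1)"
      thus ?thesis using cval cdef CB' by (simp add: k_def)
    qed
    show "coh2 cj M P1 $ r $ s = (a *\<^sub>R (\<Sum>j\<in>UNIV. kron (Eunit cj e j j) (Eunit cj e j j))
          + (\<Sum>j\<in>UNIV. \<Sum>j'\<in>UNIV - {j}.
               b *\<^sub>R (kron (Eunit cj e j j') (Eunit cj e j' j) + kron (Eunit cj e j j) (Eunit cj e j' j'))
               + c *\<^sub>R kron (Eunit cj e j j') (Eunit cj e j j'))) $ r $ s"
      unfolding target_entry[OF onb adef] K1 T3 bval s1'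
      by (rule gen1e)
  qed
  have Peq: "coh2 cj M P = lam *\<^sub>R coh2 cj M P1 + mu *\<^sub>R kron (mat 1) (mat 1)"
  proof (rule mat_eqI)
    fix r s :: "'n \<times> 'n"
    show "coh2 cj M P $ r $ s = (lam *\<^sub>R coh2 cj M P1 + mu *\<^sub>R kron (mat 1) (mat 1)) $ r $ s"
    proof -
      have km: "kron (mat 1) (mat 1) $ r $ s = (if fst r = fst s \<and> snd r = snd s then 1 else (0::'a))"
        by (simp add: kron_def mat_def)
      show ?thesis
        unfolding K vector_add_component vector_scaleR_component
        unfolding K1 km scaleR_conv_of_real B1v B2v Cv s1'
        by (rule gen2e)
    qed
  qed
  show ?thesis using Peq P1eq by (simp add: lam_def mu_def)
qed

end

theorem proposition2p10:
  fixes l :: nat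
  assumes m2: "CARD('n::finite) \<ge> 2"
  shows
  "(\<forall>(M :: (real^'n^'n) measure) (P :: real^'n^'n) (P1 :: real^'n^'n) (e :: 'n \<Rightarrow> real^'n).
      haar_prob id M \<and> orth_proj id P \<and> rank P = l \<and> 1 \<le> l \<and>
      orth_proj id P1 \<and> rank P1 = 1 \<and> orthonormal_family id e \<longrightarrow>
      (let m = CARD('n); a = (dF_real m + (real m - 1)^2) / ((real m)^2 * dF_real m);
           b = a / 3; c = a / 3 in
        coh2 id M P = (real l - real l * (real l - 1) / (real m - 1)) *\<^sub>R coh2 id M P1
                      + (real l * (real l - 1) / (real m * (real m - 1))) *\<^sub>R kron (mat 1) (mat 1)
      \<and> coh2 id M P1 = a *\<^sub>R (\<Sum>j\<in>UNIV. kron (Eunit id e j j) (Eunit id e j j))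
          + (\<Sum>j\<in>UNIV. \<Sum>j'\<in>UNIV - {j}.
               b *\<^sub>R (kron (Eunit id e j j') (Eunit id e j' j) + kron (Eunit id e j j) (Eunit id e j' j'))
               + c *\<^sub>R kron (Eunit id e j j') (Eunit id e j j'))))
   \<and>
   (\<forall>(M :: (complex^'n^'n) measure) (P :: complex^'n^'n) (P1 :: complex^'n^'n) (e :: 'n \<Rightarrow> complex^'n).
      haar_prob cnj M \<and> orth_proj cnj P \<and> rank P = l \<and> 1 \<le> l \<and>
      orth_proj cnj P1 \<and> rank P1 = 1 \<and> orthonormal_family cnj e \<longrightarrow>
      (let m = CARD('n); a = (dF_complex m + (real m - 1)^2) / ((real m)^2 * dF_complex m);
           b = a / 2; c = 0 in
        coh2 cnj M P = (real l - real l * (real l - 1) / (real m - 1)) *\<^sub>R coh2 cnj M P1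
                      + (real l * (real l - 1) / (real m * (real m - 1))) *\<^sub>R kron (mat 1) (mat 1)
      \<and> coh2 cnj M P1 = a *\<^sub>R (\<Sum>j\<in>UNIV. kron (Eunit cnj e j j) (Eunit cnj e j j))
          + (\<Sum>j\<in>UNIV. \<Sum>j'\<in>UNIV - {j}.
               b *\<^sub>R (kron (Eunit cnj e j j') (Eunit cnj e j' j) + kron (Eunit cnj e j j) (Eunit cnj e j' j'))
               + c *\<^sub>R kron (Eunit cnj e j j') (Eunit cnj e j j'))))"
  apply (intro conjI allI impI)
  subgoal premises H for M P P1 e
  proof -
    have haar: "haar_prob id M" and pP: "orth_proj id P" and rP: "rank P = l" and pP1: "orth_proj id P1"
      and rP1: "rank P1 = 1" and onb: "orthonormal_family id e" using H by auto
    define a0 where "a0 = (dF_real CARD('n) + (real CARD('n) - 1)^2) / ((real CARD('n))^2 * dF_real CARD('n))"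
    have bd: "a0 / 3 = 1 / (real CARD('n) * (real CARD('n) + 1 + 1))"
    proof -
      have "real CARD('n) + 1 + 1 = real CARD('n) + 2" by simp
      thus ?thesis unfolding a0_def using real_a[OF m2] by (simp only:)
    qed
    have fg: "coh2 id M P = (real (rank P) - real (rank P) * (real (rank P) - 1) / (real CARD('n) - 1)) *\<^sub>R coh2 id M P1
                      + (real (rank P) * (real (rank P) - 1) / (real CARD('n) * (real CARD('n) - 1))) *\<^sub>R kron (mat 1) (mat 1)
      \<and> coh2 id M P1 = a0 *\<^sub>R (\<Sum>j\<in>UNIV. kron (Eunit id e j j) (Eunit id e j j))
          + (\<Sum>j\<in>UNIV. \<Sum>j'\<in>UNIV - {j}.
               (a0 / 3) *\<^sub>R (kron (Eunit id e j j') (Eunit id e j' j) + kron (Eunit id e j j) (Eunit id e j' j'))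
               + (a0 / 3) *\<^sub>R kron (Eunit id e j j') (Eunit id e j j'))"
      apply (rule rcj.final_generic[OF m2 haar pP pP1 rP1 onb, of 1 "a0 / 3" "a0 / 3" a0])
         apply simp
        apply (rule bd)
       apply simp
      apply simp
      done
    show ?thesis unfolding Let_def a0_def[symmetric] using fg unfolding rP .
  qed
  subgoal premises H for M P P1 e
  proof -
    have haar: "haar_prob cnj M" and pP: "orth_proj cnj P" and rP: "rank P = l" and pP1: "orth_proj cnj P1"
      and rP1: "rank P1 = 1" and onb: "orthonormal_family cnj e" using H by auto
    define a0 where "a0 = (dF_complex CARD('n) + (real CARD('n) - 1)^2) / ((real CARD('n))^2 * dF_complex CARD('n))"
    have bd: "a0 / 2 = 1 / (real CARD('n) * (real CARD('n) + 1 + 0))"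
    proof -
      have "real CARD('n) + 1 + 0 = real CARD('n) + 1" by simp
      thus ?thesis unfolding a0_def using complex_a[OF m2] by (simp only:)
    qed
    have kap: "((0::real) = 1 \<and> (\<forall>x. cnj x = x)) \<or> ((0::real) = 0 \<and> (\<exists>w. w * cnj w = 1 \<and> w * w = -1))"
      by (intro disjI2 conjI refl exI[of _ "\<i>"]) simp_all
    have fg: "coh2 cnj M P = (real (rank P) - real (rank P) * (real (rank P) - 1) / (real CARD('n) - 1)) *\<^sub>R coh2 cnj M P1
                      + (real (rank P) * (real (rank P) - 1) / (real CARD('n) * (real CARD('n) - 1))) *\<^sub>R kron (mat 1) (mat 1)
      \<and> coh2 cnj M P1 = a0 *\<^sub>R (\<Sum>j\<in>UNIV. kron (Eunit cnj e j j) (Eunit cnj e j j))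
          + (\<Sum>j\<in>UNIV. \<Sum>j'\<in>UNIV - {j}.
               (a0 / 2) *\<^sub>R (kron (Eunit cnj e j j') (Eunit cnj e j' j) + kron (Eunit cnj e j j) (Eunit cnj e j' j'))
               + 0 *\<^sub>R kron (Eunit cnj e j j') (Eunit cnj e j j'))"
      apply (rule ccj.final_generic[OF m2 haar pP pP1 rP1 onb kap, of "a0 / 2" 0 a0])
        apply (rule bd)
       apply simp
      apply simp
      done
    show ?thesis unfolding Let_def a0_def[symmetric] using fg unfolding rP .
  qed
  done


end
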